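(* For $i=1,2$ let $S_i:=\{c_i+A_ix:x\in\mathcal{B}\}$, where $c_i\in\mathbb{R}^N$ with $c_1\ne c_2$ and each $A_i$ is an $N\times N$ symmetric positive semidefinite matrix. Set $\zeta:=\|c_2-c_1\|_2$ and $e:=(c_1-c_2)/\|c_1-c_2\|_2$, and let $w_\cap$ denote the Gaussian width of $\mathbb{S}^{N-1}\cap\operatorname{cone}(S_1-S_2)$. If $\zeta>\|A_1e\|_2+\|A_2e\|_2$, then $$w_\cap\le\frac{\|A_1\|_F+\|A_2\|_F}{\zeta-\big(\|A_1e\|_2+\|A_2e\|_2\big)}+\frac{1}{\sqrt{2\pi}}.$$
   Context: $\mathcal{B}$ denotes the closed Euclidean unit ball in $\mathbb{R}^N$ centered at $0$, and $\mathbb{S}^{N-1}$ the unit sphere. $S_1-S_2:=\{u-v:u\in S_1,v\in S_2\}$ and $\operatorname{cone}(S_1-S_2):=\{tz:t\ge0,z\in S_1-S_2\}$. For a set $S\subseteq\mathbb{R}^N$, its Gaussian width is $w(S):=\mathbb{E}_g\big[\sup_{z\in S}\langle z,g\rangle\big]$, where $g$ has i.i.d. $\mathcal{N}(0,1)$ entries. $\|\cdot\|_F$ is the Frobenius norm. *)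

theory Defs
  imports "HOL-Probability.Probability"
begin

definition set_minus :: "'a::ab_group_add set \<Rightarrow> 'a set \<Rightarrow> 'a set" where
  "set_minus S1 S2 = {u - v | u v. u \<in> S1 \<and> v \<in> S2}"

definition cone_of :: "'a::real_vector set \<Rightarrow> 'a set" where
  "cone_of S = {t *\<^sub>R z | t z. 0 \<le> t \<and> z \<in> S}"

definition gaussian_vec_measure :: "('n::finite \<Rightarrow> real) measure" where
  "gaussian_vec_measure = PiM UNIV (\<lambda>_. density lborel std_normal_density)"

definition gaussian_width :: "(real ^ 'n::finite) set \<Rightarrow> real" where
  "gaussian_width S =
     integral\<^sup>L gaussian_vec_measure (\<lambda>g. SUP z\<in>S. z \<bullet> (\<chi> i. g i))"

definition frob_norm :: "real ^ 'n::finite ^ 'n \<Rightarrow> real" where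
  "frob_norm A = sqrt (\<Sum>i\<in>UNIV. \<Sum>j\<in>UNIV. (A $ i $ j)\<^sup>2)"

definition sym_psd :: "real ^ 'n::finite ^ 'n \<Rightarrow> bool" where
  "sym_psd A \<longleftrightarrow> transpose A = A \<and> (\<forall>x. 0 \<le> x \<bullet> (A *v x))"

end

theory Submission
  imports Defs
begin

abbreviation "NN \<equiv> density lborel std_normal_density"

lemma prob_NN: "prob_space NN"
  by (rule prob_space_normal_density) simp

lemma prob_G: "prob_space (gaussian_vec_measure :: ('n::finite \<Rightarrow> real) measure)"
  unfolding gaussian_vec_measure_def by (rule prob_space_PiM) (rule prob_NN)

lemma sets_G: "sets (gaussian_vec_measure :: ('n::finite \<Rightarrow> real) measure) = sets (PiM UNIV (\<lambda>_. borel))"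
  unfolding gaussian_vec_measure_def by (rule sets_PiM_cong) auto

lemma distr_comp: "distr (gaussian_vec_measure :: ('n::finite \<Rightarrow> real) measure) lborel (\<lambda>\<omega>. \<omega> i) = NN"
proof -
  have "distr (gaussian_vec_measure :: ('n::finite \<Rightarrow> real) measure) lborel (\<lambda>\<omega>. \<omega> i)
     = distr (gaussian_vec_measure :: ('n::finite \<Rightarrow> real) measure) NN (\<lambda>\<omega>. \<omega> i)"
    by (rule distr_cong) auto
  also have "\<dots> = NN" unfolding gaussian_vec_measure_def
    by (rule distr_PiM_component) (auto intro: prob_NN)
  finally show ?thesis .
qed

lemma meas_comp: "(\<lambda>\<omega>. \<omega> i) \<in> measurable (gaussian_vec_measure :: ('n::finite \<Rightarrow> real) measure) borel"
  using sets_G by (metis measurable_component_singleton measurable_cong_sets UNIV_I)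

lemma distributed_comp: "distributed (gaussian_vec_measure :: ('n::finite \<Rightarrow> real) measure) lborel (\<lambda>\<omega>. \<omega> i) (\<lambda>x. ennreal (normal_density 0 1 x))"
  unfolding distributed_def using distr_comp meas_comp by auto

lemma indep_comp: "prob_space.indep_vars (gaussian_vec_measure :: ('n::finite \<Rightarrow> real) measure) (\<lambda>_. borel) (\<lambda>i \<omega>. \<omega> i) UNIV"
proof -
  interpret prob_space "gaussian_vec_measure :: ('n::finite \<Rightarrow> real) measure" by (rule prob_G)
  have "distr (gaussian_vec_measure :: ('n::finite \<Rightarrow> real) measure) (PiM UNIV (\<lambda>_. borel)) (\<lambda>x. \<lambda>i\<in>UNIV. x i)
      = distr gaussian_vec_measure (PiM UNIV (\<lambda>_. borel)) (\<lambda>x. x)" by (simp add: restrict_def)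
  also have "\<dots> = gaussian_vec_measure" by (rule distr_id2) (simp add: sets_G)
  also have "\<dots> = PiM UNIV (\<lambda>i. distr gaussian_vec_measure borel (\<lambda>\<omega>. \<omega> i))"
    unfolding gaussian_vec_measure_def
    apply (rule PiM_cong, simp)
    using distr_comp[unfolded gaussian_vec_measure_def] by (metis distr_cong sets_lborel)
  finally show ?thesis
    by (subst indep_vars_iff_distr_eq_PiM) (auto intro: meas_comp)
qed

lemma inner_chi: "v \<bullet> (\<chi> i. g i) = (\<Sum>i\<in>UNIV. v$i * g i)"
  by (simp add: inner_vec_def)

lemma lin_normal:
  fixes v :: "real^'n::finite"
  assumes "v \<noteq> 0"
  shows "distributed (gaussian_vec_measure :: ('n \<Rightarrow> real) measure) lborel (\<lambda>g. v \<bullet> (\<chi> i. g i))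
           (\<lambda>x. ennreal (normal_density 0 (norm v) x))"
proof -
  interpret prob_space "gaussian_vec_measure :: ('n::finite \<Rightarrow> real) measure" by (rule prob_G)
  define I where "I = {i. v$i \<noteq> 0}"
  have fin: "finite I" by simp
  have ne: "I \<noteq> {}" using assms unfolding I_def by (auto simp: vec_eq_iff)
  have ind: "indep_vars (\<lambda>_. borel) (\<lambda>i \<omega>. v$i * \<omega> i) I"
    using indep_vars_compose2[OF indep_comp, of "\<lambda>i x. v$i * x" "\<lambda>_. borel"]
    by (auto intro: indep_vars_subset)
  have dist: "distributed gaussian_vec_measure lborel (\<lambda>\<omega>. v$i * \<omega> i) (normal_density 0 \<bar>v$i\<bar>)"
    if "i \<in> I" for i
    using normal_density_affine[OF distributed_comp, of "v$i" 0 i] that unfolding I_def by simp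
  have "distributed gaussian_vec_measure lborel (\<lambda>x. \<Sum>i\<in>I. v$i * x i)
     (normal_density (\<Sum>i\<in>I. 0) (sqrt (\<Sum>i\<in>I. \<bar>v$i\<bar>\<^sup>2)))"
    by (rule sum_indep_normal[OF fin ne ind, of "\<lambda>i. \<bar>v$i\<bar>"]) (auto simp: I_def dist)
  moreover have "(\<lambda>x. \<Sum>i\<in>I. v$i * x i) = (\<lambda>g. v \<bullet> (\<chi> i. g i))"
    unfolding inner_chi by (intro ext sum.mono_neutral_left) (auto simp: I_def)
  moreover have "sqrt (\<Sum>i\<in>I. \<bar>v$i\<bar>\<^sup>2) = norm v"
  proof -
    have "(\<Sum>i\<in>I. \<bar>v$i\<bar>\<^sup>2) = (\<Sum>i\<in>UNIV. \<bar>v$i\<bar>\<^sup>2)"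
      by (rule sum.mono_neutral_left) (auto simp: I_def)
    then show ?thesis unfolding norm_vec_def L2_set_def by simp
  qed
  ultimately show ?thesis by simp
qed

lemma sq_moment:
  fixes v :: "real^'n::finite"
  shows "integrable (gaussian_vec_measure :: ('n \<Rightarrow> real) measure) (\<lambda>g. (v \<bullet> (\<chi> i. g i))\<^sup>2)"
    and "integral\<^sup>L (gaussian_vec_measure :: ('n \<Rightarrow> real) measure) (\<lambda>g. (v \<bullet> (\<chi> i. g i))\<^sup>2) = (norm v)\<^sup>2"
proof -
  have "integrable (gaussian_vec_measure :: ('n \<Rightarrow> real) measure) (\<lambda>g. (v \<bullet> (\<chi> i. g i))\<^sup>2) \<and>
     integral\<^sup>L (gaussian_vec_measure :: ('n \<Rightarrow> real) measure) (\<lambda>g. (v \<bullet> (\<chi> i. g i))\<^sup>2) = (norm v)\<^sup>2"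
  proof (cases "v = 0")
    case True then show ?thesis by simp
  next
    case False
    have pos: "0 < norm v" using False by simp
    note D = lin_normal[OF False]
    have "integrable lborel (\<lambda>x. normal_density 0 (norm v) x * (x - 0) ^ 1)"
      by (rule integrable_normal_moment[OF pos])
    have i1: "integrable lborel (\<lambda>x. normal_density 0 (norm v) x * x\<^sup>2)"
      using integrable_normal_moment[OF pos, of 0 2] by simp
    have e1: "integral\<^sup>L lborel (\<lambda>x. normal_density 0 (norm v) x * x\<^sup>2) = (norm v)\<^sup>2"
      using integral_normal_moment_even[OF pos, of 0 1] by simp
    have "integrable (gaussian_vec_measure :: ('n \<Rightarrow> real) measure) (\<lambda>g. (v \<bullet> (\<chi> i. g i))\<^sup>2)"
      using distributed_integrable[OF D, of "\<lambda>x. x\<^sup>2"] i1 normal_density_nonneg by auto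
    moreover have "integral\<^sup>L (gaussian_vec_measure :: ('n \<Rightarrow> real) measure) (\<lambda>g. (v \<bullet> (\<chi> i. g i))\<^sup>2) = (norm v)\<^sup>2"
      using distributed_integral[OF D, of "\<lambda>x. x\<^sup>2"] e1 normal_density_nonneg by auto
    ultimately show ?thesis by simp
  qed
  then show "integrable (gaussian_vec_measure :: ('n \<Rightarrow> real) measure) (\<lambda>g. (v \<bullet> (\<chi> i. g i))\<^sup>2)"
    and "integral\<^sup>L (gaussian_vec_measure :: ('n \<Rightarrow> real) measure) (\<lambda>g. (v \<bullet> (\<chi> i. g i))\<^sup>2) = (norm v)\<^sup>2"
    by auto
qed

lemma pos_moment:
  fixes v :: "real^'n::finite"
  assumes "norm v = 1"
  shows "integrable (gaussian_vec_measure :: ('n \<Rightarrow> real) measure) (\<lambda>g. max 0 (v \<bullet> (\<chi> i. g i)))"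
    and "integral\<^sup>L (gaussian_vec_measure :: ('n \<Rightarrow> real) measure) (\<lambda>g. max 0 (v \<bullet> (\<chi> i. g i))) = 1 / sqrt (2 * pi)"
proof -
  have v0: "v \<noteq> 0" using assms by auto
  note D = lin_normal[OF v0, unfolded assms]
  have pos: "(0::real) < 1" by simp
  have ia: "integrable lborel (\<lambda>x. normal_density 0 1 x * \<bar>x\<bar>)"
    using integrable_normal_moment_abs[OF pos, of 0 1] by simp
  have ib: "integrable lborel (\<lambda>x. normal_density 0 1 x * x)"
    using integrable_normal_moment_nz_1[OF pos, of 0] by simp
  have ea: "integral\<^sup>L lborel (\<lambda>x. normal_density 0 1 x * \<bar>x\<bar>) = sqrt (2 / pi)"
    using integral_normal_moment_abs_odd[OF pos, of 0 0] by simp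
  have eb: "integral\<^sup>L lborel (\<lambda>x. normal_density 0 1 x * x) = 0"
    using integral_normal_moment_nz_1[OF pos, of 0] by simp
  have eq: "(\<lambda>x. normal_density 0 1 x * max 0 x) = (\<lambda>x. (normal_density 0 1 x * \<bar>x\<bar> + normal_density 0 1 x * x) / 2)"
    by (auto simp: max_def field_simps)
  have i1: "integrable lborel (\<lambda>x. normal_density 0 1 x * max 0 x)"
    unfolding eq using ia ib by auto
  have "integral\<^sup>L lborel (\<lambda>x. normal_density 0 1 x * max 0 x) = sqrt (2 / pi) / 2"
    unfolding eq using ia ib ea eb by simp
  also have "\<dots> = 1 / sqrt (2 * pi)"
    by (simp add: real_sqrt_divide real_sqrt_mult field_simps)
  finally have e1: "integral\<^sup>L lborel (\<lambda>x. normal_density 0 1 x * max 0 x) = 1 / sqrt (2 * pi)" .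
  show "integrable (gaussian_vec_measure :: ('n \<Rightarrow> real) measure) (\<lambda>g. max 0 (v \<bullet> (\<chi> i. g i)))"
    using distributed_integrable[OF D, of "\<lambda>x. max 0 x"] i1 normal_density_nonneg by auto
  show "integral\<^sup>L (gaussian_vec_measure :: ('n \<Rightarrow> real) measure) (\<lambda>g. max 0 (v \<bullet> (\<chi> i. g i))) = 1 / sqrt (2 * pi)"
    using distributed_integral[OF D, of "\<lambda>x. max 0 x"] e1 normal_density_nonneg by auto
qed

lemma norm_sq_vec: "(norm (y::real^'n::finite))\<^sup>2 = (\<Sum>i\<in>UNIV. (y$i)\<^sup>2)"
  unfolding norm_vec_def L2_set_def by (simp add: sum_nonneg)

lemma mv_nth: "(A *v y) $ i = (A $ i) \<bullet> (y::real^'n::finite)"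
  by (simp add: matrix_vector_mult_def inner_vec_def mult.commute)

lemma frob_sq: "(frob_norm A)\<^sup>2 = (\<Sum>i\<in>UNIV. (norm (A$i))\<^sup>2)"
  unfolding frob_norm_def norm_sq_vec by (simp add: sum_nonneg)

lemma Ybound:
  fixes A :: "real^'n::finite^'n" and e :: "real^'n"
  assumes e1: "norm e = 1"
  shows "\<exists>Q. integrable (gaussian_vec_measure :: ('n \<Rightarrow> real) measure) Q \<and>
     (\<forall>g. norm (A *v ((\<chi> i. g i) - ((\<chi> i. g i) \<bullet> e) *\<^sub>R e)) \<le> Q g) \<and>
     integral\<^sup>L (gaussian_vec_measure :: ('n \<Rightarrow> real) measure) Q \<le> frob_norm A"
proof -
  define F where "F = frob_norm A"
  have F0: "F \<ge> 0" unfolding F_def frob_norm_def by (simp add: sum_nonneg)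
  define w where "w i = A$i - (A$i \<bullet> e) *\<^sub>R e" for i
  have Ysq: "(norm (A *v (x - (x \<bullet> e) *\<^sub>R e)))\<^sup>2 = (\<Sum>i\<in>UNIV. (w i \<bullet> x)\<^sup>2)" for x
    unfolding norm_sq_vec mv_nth w_def by (simp add: inner_diff_left inner_diff_right algebra_simps inner_commute)
  have wn: "(norm (w i))\<^sup>2 \<le> (norm (A$i))\<^sup>2" for i
  proof -
    have "(norm (w i))\<^sup>2 = (norm (A$i))\<^sup>2 - (A$i \<bullet> e)\<^sup>2"
      unfolding w_def power2_norm_eq_inner using e1 power2_norm_eq_inner[of e]
      by (simp add: inner_diff_left inner_diff_right algebra_simps inner_commute power2_eq_square)
    then show ?thesis by simp
  qed
  have sw: "(\<Sum>i\<in>UNIV. (norm (w i))\<^sup>2) \<le> F\<^sup>2"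
    unfolding F_def frob_sq by (rule sum_mono) (rule wn)
  show ?thesis
  proof (cases "F = 0")
    case True
    have "(\<Sum>i\<in>UNIV. (norm (A$i))\<^sup>2) = 0" using True frob_sq[of A] unfolding F_def by simp
    then have "\<forall>i\<in>UNIV. (norm (A$i))\<^sup>2 = 0" by (subst (asm) sum_nonneg_eq_0_iff) auto
    then have "A = 0" by (auto simp: vec_eq_iff)
    then show ?thesis using True F_def by (intro exI[of _ "\<lambda>_. 0"]) auto
  next
    case False
    then have Fp: "F > 0" using F0 by simp
    define Q where "Q g = ((\<Sum>i\<in>UNIV. (w i \<bullet> (\<chi> i. g i))\<^sup>2) + F\<^sup>2) / (2 * F)" for g :: "'n \<Rightarrow> real"
    have iS: "integrable (gaussian_vec_measure :: ('n \<Rightarrow> real) measure) (\<lambda>g. \<Sum>i\<in>UNIV. (w i \<bullet> (\<chi> i. g i))\<^sup>2)"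
      by (intro Bochner_Integration.integrable_sum sq_moment(1))
    have eS: "integral\<^sup>L (gaussian_vec_measure :: ('n \<Rightarrow> real) measure) (\<lambda>g. \<Sum>i\<in>UNIV. (w i \<bullet> (\<chi> i. g i))\<^sup>2)
        = (\<Sum>i\<in>UNIV. (norm (w i))\<^sup>2)"
      by (subst Bochner_Integration.integral_sum) (simp_all add: sq_moment)
    interpret prob_space "gaussian_vec_measure :: ('n::finite \<Rightarrow> real) measure" by (rule prob_G)
    have iQ: "integrable (gaussian_vec_measure :: ('n \<Rightarrow> real) measure) Q"
      unfolding Q_def using iS by auto
    have "integral\<^sup>L (gaussian_vec_measure :: ('n \<Rightarrow> real) measure) Q = ((\<Sum>i\<in>UNIV. (norm (w i))\<^sup>2) + F\<^sup>2) / (2 * F)"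
      unfolding Q_def using iS eS by (simp add: prob_space)
    also have "\<dots> \<le> (F\<^sup>2 + F\<^sup>2) / (2 * F)"
      using sw Fp by (intro divide_right_mono) auto
    also have "\<dots> = F" using Fp by (simp add: power2_eq_square)
    finally have eQ: "integral\<^sup>L (gaussian_vec_measure :: ('n \<Rightarrow> real) measure) Q \<le> F" .
    have pw: "norm (A *v ((\<chi> i. g i) - ((\<chi> i. g i) \<bullet> e) *\<^sub>R e)) \<le> Q g" for g
    proof -
      define Y where "Y = norm (A *v ((\<chi> i. g i) - ((\<chi> i. g i) \<bullet> e) *\<^sub>R e))"
      have "0 \<le> (Y - F)\<^sup>2" by simp
      then have "2 * F * Y \<le> Y\<^sup>2 + F\<^sup>2" by (simp add: power2_eq_square algebra_simps)
      then have "Y \<le> (Y\<^sup>2 + F\<^sup>2) / (2 * F)" using Fp by (simp add: field_simps)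
      then show ?thesis unfolding Q_def Y_def Ysq .
    qed
    show ?thesis using iQ eQ pw F_def by blast
  qed
qed

lemma mv_inner_transpose: "(A *v a) \<bullet> (y::real^'n::finite) = a \<bullet> (transpose A *v y)"
  unfolding inner_vec_def matrix_vector_mult_def transpose_def
  by (simp add: sum_distrib_left sum_distrib_right mult_ac, subst sum.swap, simp add: mult_ac)

lemma sym_inner: "transpose A = A \<Longrightarrow> (A *v a) \<bullet> (y::real^'n::finite) = a \<bullet> (A *v y)"
  using mv_inner_transpose[of A a y] by simp

lemma inner_le_norm1: "norm (a::real^'n::finite) \<le> 1 \<Longrightarrow> a \<bullet> y \<le> norm y"
proof -
  assume "norm a \<le> 1"
  have "a \<bullet> y \<le> norm a * norm y" by (rule norm_cauchy_schwarz)
  also have "\<dots> \<le> norm y" using \<open>norm a \<le> 1\<close> by (simp add: mult_left_le_one_le)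
  finally show ?thesis .
qed

lemma pointwise:
  fixes c1 c2 x z e :: "real^'n::finite" and A1 A2 :: "real^'n^'n"
  assumes s1: "transpose A1 = A1" and s2: "transpose A2 = A2" and c12: "c1 \<noteq> c2"
    and e_def: "e = (c1 - c2) /\<^sub>R norm (c1 - c2)"
    and D_def: "D = norm (c2 - c1) - (norm (A1 *v e) + norm (A2 *v e))"
    and Dp: "D > 0"
    and z: "z \<in> sphere 0 1 \<inter> cone_of (set_minus
            ((\<lambda>x. c1 + A1 *v x) ` cball 0 1) ((\<lambda>x. c2 + A2 *v x) ` cball 0 1))"
  shows "z \<bullet> x \<le> max 0 (e \<bullet> x) + (norm (A1 *v (x - (x \<bullet> e) *\<^sub>R e)) + norm (A2 *v (x - (x \<bullet> e) *\<^sub>R e))) / D"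
proof -
  obtain t a b where t: "t \<ge> 0" and a: "norm a \<le> 1" and b: "norm b \<le> 1"
    and zt: "z = t *\<^sub>R ((c1 + A1 *v a) - (c2 + A2 *v b))"
    using z unfolding cone_of_def set_minus_def by auto
  have zn: "norm z = 1" using z by simp
  define \<zeta> where "\<zeta> = norm (c1 - c2)"
  have zp: "\<zeta> > 0" using c12 unfolding \<zeta>_def by simp
  have ce: "c1 - c2 = \<zeta> *\<^sub>R e" using zp unfolding e_def \<zeta>_def by simp
  have en: "norm e = 1" using c12 unfolding e_def by simp
  have ee: "e \<bullet> e = 1" using en by (simp add: norm_eq_1)
  define u where "u = A1 *v a - A2 *v b"
  have zu: "z = t *\<^sub>R (\<zeta> *\<^sub>R e + u)" unfolding zt u_def ce[symmetric] by (simp add: algebra_simps)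
  have ue: "u \<bullet> e \<ge> - (norm (A1 *v e) + norm (A2 *v e))"
  proof -
    have 1: "(A1 *v a) \<bullet> e \<ge> - norm (A1 *v e)"
      using inner_le_norm1[OF a, of "- (A1 *v e)"] sym_inner[OF s1] by simp
    have 2: "(A2 *v b) \<bullet> e \<le> norm (A2 *v e)"
      using inner_le_norm1[OF b, of "A2 *v e"] sym_inner[OF s2] by simp
    show ?thesis unfolding u_def using 1 2 by (simp add: inner_diff_left)
  qed
  have zD: "\<zeta> + u \<bullet> e \<ge> D" using ue unfolding D_def \<zeta>_def by (simp add: norm_minus_commute)
  define s where "s = z \<bullet> e"
  have s_eq: "s = t * (\<zeta> + u \<bullet> e)" unfolding s_def zu by (simp add: inner_simps ee)
  have s1': "s \<le> 1" using norm_cauchy_schwarz[of z e] zn en unfolding s_def by simp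
  have s0: "s \<ge> 0" using s_eq t zD Dp by simp
  have tD: "t \<le> 1 / D"
  proof -
    have "t * D \<le> t * (\<zeta> + u \<bullet> e)" using t zD by (simp add: mult_left_mono)
    then have "t * D \<le> 1" using s_eq s1' by simp
    then show ?thesis using Dp by (simp add: field_simps)
  qed
  define P where "P = x - (x \<bullet> e) *\<^sub>R e"
  have eP: "e \<bullet> P = 0" unfolding P_def by (simp add: inner_simps ee inner_commute)
  have zx: "z \<bullet> x = s * (e \<bullet> x) + t * (u \<bullet> P)"
  proof -
    have "x = (x \<bullet> e) *\<^sub>R e + P" unfolding P_def by simp
    then have "z \<bullet> x = (x \<bullet> e) * s + z \<bullet> P" unfolding s_def
      by (metis inner_add_right inner_scaleR_right)
    also have "z \<bullet> P = t * (u \<bullet> P)" unfolding zu using eP by (simp add: inner_simps)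
    finally show ?thesis by (simp add: inner_commute)
  qed
  define Y where "Y = norm (A1 *v P) + norm (A2 *v P)"
  have uP: "u \<bullet> P \<le> Y"
  proof -
    have 1: "(A1 *v a) \<bullet> P \<le> norm (A1 *v P)"
      using inner_le_norm1[OF a, of "A1 *v P"] sym_inner[OF s1] by simp
    have 2: "- ((A2 *v b) \<bullet> P) \<le> norm (A2 *v P)"
      using inner_le_norm1[OF b, of "- (A2 *v P)"] sym_inner[OF s2] by simp
    show ?thesis unfolding u_def Y_def using 1 2 by (simp add: inner_diff_left)
  qed
  have Y0: "Y \<ge> 0" unfolding Y_def by simp
  have p1: "s * (e \<bullet> x) \<le> max 0 (e \<bullet> x)"
  proof (cases "e \<bullet> x \<ge> 0")
    case True then show ?thesis using s1' s0 mult_left_le_one_le[of "e \<bullet> x" s] by simp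
  next
    case False then show ?thesis using s0 by (simp add: mult_nonneg_nonpos)
  qed
  have p2: "t * (u \<bullet> P) \<le> Y / D"
  proof -
    have "t * (u \<bullet> P) \<le> t * Y" using t uP by (simp add: mult_left_mono)
    also have "\<dots> \<le> (1 / D) * Y" using mult_right_mono[OF tD Y0] .
    finally show ?thesis by simp
  qed
  show ?thesis using zx p1 p2 unfolding Y_def P_def by simp
qed

theorem theorem2:
  fixes c1 c2 :: "real ^ 'n::finite" and A1 A2 :: "real ^ 'n ^ 'n"
  assumes "c1 \<noteq> c2"
    and "sym_psd A1" and "sym_psd A2"
    and "norm (c2 - c1) > norm (A1 *v ((c1 - c2) /\<^sub>R norm (c1 - c2)))
                          + norm (A2 *v ((c1 - c2) /\<^sub>R norm (c1 - c2)))"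
  shows "gaussian_width (sphere 0 1 \<inter> cone_of (set_minus
            ((\<lambda>x. c1 + A1 *v x) ` cball 0 1) ((\<lambda>x. c2 + A2 *v x) ` cball 0 1)))
         \<le> (frob_norm A1 + frob_norm A2)
             / (norm (c2 - c1) - (norm (A1 *v ((c1 - c2) /\<^sub>R norm (c1 - c2)))
                                 + norm (A2 *v ((c1 - c2) /\<^sub>R norm (c1 - c2)))))
           + 1 / sqrt (2 * pi)"
proof -
  define e where "e = (c1 - c2) /\<^sub>R norm (c1 - c2)"
  define D where "D = norm (c2 - c1) - (norm (A1 *v e) + norm (A2 *v e))"
  define S where "S = sphere 0 1 \<inter> cone_of (set_minus
            ((\<lambda>x. c1 + A1 *v x) ` cball 0 1) ((\<lambda>x. c2 + A2 *v x) ` cball 0 1))"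
  have Dp: "D > 0" using assms(4) unfolding D_def e_def by simp
  have s1: "transpose A1 = A1" and s2: "transpose A2 = A2" using assms(2,3) unfolding sym_psd_def by auto
  have en: "norm e = 1" using assms(1) unfolding e_def by simp
  have eS: "e \<in> S"
  proof -
    have "(c1 + A1 *v 0) - (c2 + A2 *v 0) \<in> set_minus
            ((\<lambda>x. c1 + A1 *v x) ` cball 0 1) ((\<lambda>x. c2 + A2 *v x) ` cball 0 1)"
    proof -
      have "c1 + A1 *v 0 \<in> (\<lambda>x. c1 + A1 *v x) ` cball 0 1" by (rule imageI) simp
      moreover have "c2 + A2 *v 0 \<in> (\<lambda>x. c2 + A2 *v x) ` cball 0 1" by (rule imageI) simp
      ultimately show ?thesis unfolding set_minus_def by blast
    qed
    moreover have "e = (1 / norm (c1 - c2)) *\<^sub>R ((c1 + A1 *v 0) - (c2 + A2 *v 0))"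
      unfolding e_def by (simp add: divide_inverse_commute)
    ultimately have "e \<in> cone_of (set_minus
            ((\<lambda>x. c1 + A1 *v x) ` cball 0 1) ((\<lambda>x. c2 + A2 *v x) ` cball 0 1))"
      unfolding cone_of_def by (metis (mono_tags, lifting) mem_Collect_eq norm_ge_zero zero_le_divide_1_iff)
    then show ?thesis unfolding S_def using en by simp
  qed
  then have Sne: "S \<noteq> {}" by auto
  obtain Q1 where Q1: "integrable (gaussian_vec_measure :: ('n \<Rightarrow> real) measure) Q1"
     "\<And>g. norm (A1 *v ((\<chi> i. g i) - ((\<chi> i. g i) \<bullet> e) *\<^sub>R e)) \<le> Q1 g"
     "integral\<^sup>L (gaussian_vec_measure :: ('n \<Rightarrow> real) measure) Q1 \<le> frob_norm A1"
    using Ybound[OF en, of A1] by blast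
  obtain Q2 where Q2: "integrable (gaussian_vec_measure :: ('n \<Rightarrow> real) measure) Q2"
     "\<And>g. norm (A2 *v ((\<chi> i. g i) - ((\<chi> i. g i) \<bullet> e) *\<^sub>R e)) \<le> Q2 g"
     "integral\<^sup>L (gaussian_vec_measure :: ('n \<Rightarrow> real) measure) Q2 \<le> frob_norm A2"
    using Ybound[OF en, of A2] by blast
  define H where "H g = max 0 (e \<bullet> (\<chi> i. g i)) + (Q1 g + Q2 g) / D" for g :: "'n \<Rightarrow> real"
  define f where "f g = (SUP z\<in>S. z \<bullet> (\<chi> i. g i))" for g :: "'n \<Rightarrow> real"
  have fH: "f g \<le> H g" for g
    unfolding f_def
  proof (rule cSUP_least[OF Sne])
    fix z assume "z \<in> S"
    let ?x = "(\<chi> i. g i) :: real^'n"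
    have "z \<bullet> ?x \<le> max 0 (e \<bullet> ?x) + (norm (A1 *v (?x - (?x \<bullet> e) *\<^sub>R e)) + norm (A2 *v (?x - (?x \<bullet> e) *\<^sub>R e))) / D"
      by (rule pointwise[OF s1 s2 assms(1) e_def D_def Dp \<open>z \<in> S\<close>[unfolded S_def]])
    also have "\<dots> \<le> H g" unfolding H_def
      using Q1(2)[of g] Q2(2)[of g] Dp by (intro add_left_mono divide_right_mono) auto
    finally show "z \<bullet> ?x \<le> H g" .
  qed
  have iH: "integrable (gaussian_vec_measure :: ('n \<Rightarrow> real) measure) H"
    unfolding H_def using pos_moment(1)[OF en] Q1(1) Q2(1) by auto
  have "integral\<^sup>L (gaussian_vec_measure :: ('n \<Rightarrow> real) measure) H
     = 1 / sqrt (2 * pi) + (integral\<^sup>L gaussian_vec_measure Q1 + integral\<^sup>L gaussian_vec_measure Q2) / D"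
    unfolding H_def using pos_moment[OF en] Q1(1) Q2(1) by simp
  also have "\<dots> \<le> 1 / sqrt (2 * pi) + (frob_norm A1 + frob_norm A2) / D"
    using Q1(3) Q2(3) Dp by (intro add_left_mono divide_right_mono) auto
  finally have eH: "integral\<^sup>L (gaussian_vec_measure :: ('n \<Rightarrow> real) measure) H \<le> 1 / sqrt (2 * pi) + (frob_norm A1 + frob_norm A2) / D" .
  have F0: "frob_norm A1 + frob_norm A2 \<ge> 0" unfolding frob_norm_def by (simp add: sum_nonneg)
  have "gaussian_width S \<le> (frob_norm A1 + frob_norm A2) / D + 1 / sqrt (2 * pi)"
  proof (cases "integrable (gaussian_vec_measure :: ('n \<Rightarrow> real) measure) f")
    case True
    have "gaussian_width S = integral\<^sup>L gaussian_vec_measure f" unfolding gaussian_width_def f_def ..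
    also have "\<dots> \<le> integral\<^sup>L gaussian_vec_measure H" by (rule integral_mono[OF True iH fH])
    finally show ?thesis using eH by simp
  next
    case False
    have "gaussian_width S = integral\<^sup>L gaussian_vec_measure f" unfolding gaussian_width_def f_def ..
    also have "\<dots> = 0" using False by (rule not_integrable_integral_eq)
    finally show ?thesis using F0 Dp by simp
  qed
  then show ?thesis unfolding S_def D_def e_def .
qed

end
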